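(* Let $\mathbb{G}$ be an undirected, unweighted random network model which is strongly idemetric (SI) and uniformly sparse (US). Then $\mathbb{G}$ is a weak ball expander (PUMP).
   Context: A random network model $\mathbb{G}$ assigns to every $n\in\mathbb{N}$ a probability distribution over graphs with $n$ nodes; $G_n$ denotes a graph sampled from it. $d(u,v)$ is the graph distance (length of a shortest path, $\infty$ if none). For a node $u$, $B_u(r)$ is the set of nodes at distance at most $r$ from $u$, and $\overline{B_u(r)}$ its complement. For node sets $X,Y$, $e(X,Y)$ is the number of edges with one endpoint in $X$ and one in $Y$. PUMP: for every $0<\epsilon<\tfrac12$ there exists $\alpha_\epsilon>0$ such that for all sufficiently large $n$, if $u$ is chosen uniformly at random from $G_n$ then with probability $>1-\epsilon$ both (i) there exists $r$ with $|B_u(r)|\ge \epsilon n$, and (ii) for all $r$ with $\epsilon n\le |B_u(r)|\le (1-\epsilon)n$, $e(B_u(r),\overline{B_u(r)})\ge \alpha_\epsilon |B_u(r)|$. US: for each $\epsilon>0$ there is a constant $C_\epsilon$ such that for all sufficiently large $n$, with probability at least $1-\epsilon$, for any set of $y\ge\epsilon n$ edges of $G_n$ every node cover (set of nodes meeting every edge of the set) has size at least $y/C_\epsilon$. SI: there exist a finite-valued function $f$ and, for each $\epsilon>0$, a bound $b_\epsilon$ independent of $n$, such that for all sufficiently large $n$, if $u,v$ are chosen uniformly at random from $G_n$ then $|f(n)-d(u,v)|<b_\epsilon$ with probability $>1-\epsilon$. *)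

theory Defs
  imports "HOL-Probability.Probability" "HOL-Library.Extended_Nat"
begin

text \<open>A graph on n nodes: node set {..<n}, edge set a set of 2-element sets of nodes.
  A random network model assigns to each n a distribution (pmf) over such graphs.\<close>

type_synonym graph = "nat set set"

definition simple_graph_on :: "nat \<Rightarrow> graph \<Rightarrow> bool" where
  "simple_graph_on n G \<longleftrightarrow> (\<forall>e\<in>G. \<exists>x y. x \<noteq> y \<and> x < n \<and> y < n \<and> e = {x, y})"

definition random_network_model :: "(nat \<Rightarrow> graph pmf) \<Rightarrow> bool" where
  "random_network_model M \<longleftrightarrow> (\<forall>n. \<forall>G \<in> set_pmf (M n). simple_graph_on n G)"

definition walk :: "graph \<Rightarrow> nat list \<Rightarrow> bool" where
  "walk G p \<longleftrightarrow> p \<noteq> [] \<and> (\<forall>i. Suc i < length p \<longrightarrow> {p ! i, p ! Suc i} \<in> G)"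

definition gdist :: "graph \<Rightarrow> nat \<Rightarrow> nat \<Rightarrow> enat" where
  "gdist G u v = (INF p \<in> {p. walk G p \<and> hd p = u \<and> last p = v}. enat (length p - 1))"

definition ball :: "nat \<Rightarrow> graph \<Rightarrow> nat \<Rightarrow> nat \<Rightarrow> nat set" where
  "ball n G u r = {v \<in> {..<n}. gdist G u v \<le> enat r}"

definition ecount :: "graph \<Rightarrow> nat set \<Rightarrow> nat set \<Rightarrow> nat" where
  "ecount G X Y = card {e \<in> G. \<exists>x\<in>X. \<exists>y\<in>Y. e = {x, y}}"

definition node_cover :: "nat \<Rightarrow> graph \<Rightarrow> nat set \<Rightarrow> bool" where
  "node_cover n F S \<longleftrightarrow> S \<subseteq> {..<n} \<and> (\<forall>e\<in>F. e \<inter> S \<noteq> {})"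

definition PUMP :: "(nat \<Rightarrow> graph pmf) \<Rightarrow> bool" where
  "PUMP M \<longleftrightarrow> (\<forall>\<epsilon>::real. 0 < \<epsilon> \<and> \<epsilon> < 1/2 \<longrightarrow> (\<exists>\<alpha>::real. \<alpha> > 0 \<and>
     (\<forall>\<^sub>F n in sequentially.
        measure_pmf.prob (pair_pmf (M n) (pmf_of_set {..<n}))
          {(G, u). (\<exists>r. real (card (ball n G u r)) \<ge> \<epsilon> * real n) \<and>
                   (\<forall>r. \<epsilon> * real n \<le> real (card (ball n G u r)) \<and>
                        real (card (ball n G u r)) \<le> (1 - \<epsilon>) * real n \<longrightarrow>
                        real (ecount G (ball n G u r) ({..<n} - ball n G u r))
                          \<ge> \<alpha> * real (card (ball n G u r)))}
        > 1 - \<epsilon>)))"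

definition uniformly_sparse :: "(nat \<Rightarrow> graph pmf) \<Rightarrow> bool" where
  "uniformly_sparse M \<longleftrightarrow> (\<forall>\<epsilon>::real. \<epsilon> > 0 \<longrightarrow> (\<exists>C::real. C > 0 \<and>
     (\<forall>\<^sub>F n in sequentially.
        measure_pmf.prob (M n)
          {G. \<forall>F S. F \<subseteq> G \<and> real (card F) \<ge> \<epsilon> * real n \<and> node_cover n F S \<longrightarrow>
                    real (card S) \<ge> real (card F) / C}
        \<ge> 1 - \<epsilon>)))"

definition strongly_idemetric :: "(nat \<Rightarrow> graph pmf) \<Rightarrow> bool" where
  "strongly_idemetric M \<longleftrightarrow> (\<exists>f :: nat \<Rightarrow> real. \<forall>\<epsilon>::real. \<epsilon> > 0 \<longrightarrow> (\<exists>b::real.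
     (\<forall>\<^sub>F n in sequentially.
        measure_pmf.prob (pair_pmf (M n) (pair_pmf (pmf_of_set {..<n}) (pmf_of_set {..<n})))
          {(G, u, v). \<exists>k. gdist G u v = enat k \<and> \<bar>f n - real k\<bar> < b}
        > 1 - \<epsilon>)))"

end

theory Submission imports Defs begin

definition layer :: "nat \<Rightarrow> graph \<Rightarrow> nat \<Rightarrow> nat \<Rightarrow> nat set" where
  "layer n G u j = {v \<in> {..<n}. gdist G u v = enat j}"

lemma Inf_enat_in: "A \<noteq> {} \<Longrightarrow> Inf (A::enat set) \<in> A"
  unfolding Inf_enat_def by (auto intro: LeastI)

lemma gdist_le:
  assumes "walk G p" "hd p = u" "last p = v"
  shows "gdist G u v \<le> enat (length p - 1)"
  unfolding gdist_def using assms by (intro INF_lower2[of p]) auto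

lemma gdist_attained:
  assumes "gdist G u v = enat k"
  shows "\<exists>p. walk G p \<and> hd p = u \<and> last p = v \<and> length p - 1 = k"
proof -
  let ?W = "{p. walk G p \<and> hd p = u \<and> last p = v}"
  let ?I = "(\<lambda>p. enat (length p - 1)) ` ?W"
  have ne: "?I \<noteq> {}"
  proof
    assume "?I = {}"
    then have "?W = {}" by blast
    have "gdist G u v = Inf ?I" by (simp add: gdist_def)
    also have "\<dots> = Inf {}" using \<open>?W = {}\<close> by (simp only: image_empty)
    finally have "gdist G u v = \<infinity>" by (simp add: top_enat_def)
    with assms show False by simp
  qed
  have "Inf ?I \<in> ?I" using ne by (rule Inf_enat_in)
  then show ?thesis using assms unfolding gdist_def by auto
qed

lemma walk_snoc:
  assumes "walk G p" "{last p, v} \<in> G"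
  shows "walk G (p @ [v])"
  using assms unfolding walk_def
  apply (auto simp: nth_append last_conv_nth less_Suc_eq)
  by (subgoal_tac "i = length p - Suc 0") auto

lemma walk_butlast:
  assumes "walk G p" "length p \<ge> 2"
  shows "walk G (butlast p) \<and> {last (butlast p), last p} \<in> G"
proof -
  have "butlast p \<noteq> []" using assms(2) by (cases p) auto
  then have 1: "walk G (butlast p)"
    using assms unfolding walk_def by (auto simp: nth_butlast)
  have "{p ! (length p - 2), p ! Suc (length p - 2)} \<in> G"
    using assms unfolding walk_def by auto
  moreover have "last (butlast p) = p ! (length p - 2)"
    using assms \<open>butlast p \<noteq> []\<close> by (subst last_conv_nth) (auto simp: nth_butlast numeral_2_eq_2)
  moreover have "last p = p ! Suc (length p - 2)"
    using assms by (cases p) (auto simp: last_conv_nth numeral_2_eq_2 Suc_diff_Suc)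
  ultimately show ?thesis using 1 by simp
qed

lemma gdist_pred:
  assumes "gdist G u v = enat (Suc j)"
  shows "\<exists>w. gdist G u w = enat j \<and> {w, v} \<in> G"
proof -
  obtain p where p: "walk G p" "hd p = u" "last p = v" "length p - 1 = Suc j"
    using gdist_attained[OF assms] by blast
  have len: "length p \<ge> 2" using p(4) by simp
  define q where "q = butlast p"
  define w where "w = last q"
  have q: "walk G q" "{w, v} \<in> G" using walk_butlast[OF p(1) len] p(3) by (auto simp: q_def w_def)
  have hq: "hd q = u" using p(2) len unfolding q_def
    by (cases p; cases "tl p") auto
  have lq: "length q - 1 = j" using p(4) unfolding q_def by simp
  have le: "gdist G u w \<le> enat j" using gdist_le[OF q(1) hq] lq by (simp add: w_def)
  then obtain j' where j': "gdist G u w = enat j'" "j' \<le> j"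
    by (cases "gdist G u w") auto
  have "j' = j"
  proof (rule ccontr)
    assume "j' \<noteq> j"
    then have "j' < j" using j' by simp
    obtain p' where p': "walk G p'" "hd p' = u" "last p' = w" "length p' - 1 = j'"
      using gdist_attained[OF j'(1)] by blast
    have "walk G (p' @ [v])" using walk_snoc[OF p'(1)] p'(3) q(2) by simp
    moreover have "p' \<noteq> []" using p'(1) unfolding walk_def by simp
    ultimately have "gdist G u v \<le> enat (length (p' @ [v]) - 1)"
      using gdist_le[of G "p' @ [v]" u v] p' by simp
    also have "\<dots> = enat (Suc j')" using p' \<open>p' \<noteq> []\<close> by (cases p') auto
    finally show False using assms \<open>j' < j\<close> by simp
  qed
  then show ?thesis using j' q by auto
qed

lemma simple_edge:
  assumes "simple_graph_on n G" "{w, v} \<in> G"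
  shows "w < n \<and> v < n"
proof -
  obtain x y where "x < n" "y < n" "{w, v} = {x, y}"
    using assms unfolding simple_graph_on_def by blast
  then have "w \<in> {x, y}" "v \<in> {x, y}" by blast+
  then show ?thesis using \<open>x < n\<close> \<open>y < n\<close> by auto
qed

lemma simple_sub:
  assumes "simple_graph_on n G"
  shows "G \<subseteq> Pow {..<n}"
  proof
    fix e assume "e \<in> G"
    have "\<exists>x y. x \<noteq> y \<and> x < n \<and> y < n \<and> e = {x, y}"
      using assms \<open>e \<in> G\<close> unfolding simple_graph_on_def by (rule bspec)
    then obtain x y where "x < n" "y < n" "e = {x, y}" by blast
    then show "e \<in> Pow {..<n}" by auto
  qed

lemma simple_finite:
  assumes "simple_graph_on n G"
  shows "finite G"
proof -
  have "G \<subseteq> Pow {..<n}"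
  proof
    fix e assume "e \<in> G"
    have "\<exists>x y. x \<noteq> y \<and> x < n \<and> y < n \<and> e = {x, y}"
      using assms \<open>e \<in> G\<close> unfolding simple_graph_on_def by (rule bspec)
    then obtain x y where "x < n" "y < n" "e = {x, y}" by blast
    then show "e \<in> Pow {..<n}" by auto
  qed
  then show ?thesis by (rule finite_subset) simp
qed

lemma layer_edges:
  assumes "simple_graph_on n G"
  shows "\<exists>F. F \<subseteq> G \<and> card F = card (layer n G u (Suc j)) \<and> node_cover n F (layer n G u j) \<and>
      F \<subseteq> {e \<in> G. \<exists>x\<in>ball n G u j. \<exists>y\<in>{..<n} - ball n G u j. e = {x, y}}"
proof -
  define pw where "pw v = (SOME w. gdist G u w = enat j \<and> {w, v} \<in> G)" for v
  have pw: "gdist G u (pw v) = enat j \<and> {pw v, v} \<in> G" if "v \<in> layer n G u (Suc j)" for v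
  proof -
    have "\<exists>w. gdist G u w = enat j \<and> {w, v} \<in> G"
      using that gdist_pred unfolding layer_def by blast
    then show ?thesis unfolding pw_def by (rule someI_ex)
  qed
  have pwn: "pw v < n" if "v \<in> layer n G u (Suc j)" for v
    using pw[OF that] simple_edge[OF assms] by blast
  define F where "F = (\<lambda>v. {pw v, v}) ` layer n G u (Suc j)"
  have inj: "inj_on (\<lambda>v. {pw v, v}) (layer n G u (Suc j))"
  proof (rule inj_onI)
    fix v v' assume v: "v \<in> layer n G u (Suc j)" and v': "v' \<in> layer n G u (Suc j)"
      and eq: "{pw v, v} = {pw v', v'}"
    show "v = v'"
    proof (rule ccontr)
      assume "v \<noteq> v'"
      moreover have "v \<in> {pw v', v'}" using eq by blast
      ultimately have "v = pw v'" by blast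
      then have "gdist G u v = enat j" using pw[OF v'] by simp
      then show False using v unfolding layer_def by simp
    qed
  qed
  have "F \<subseteq> G"
  proof
    fix e assume "e \<in> F"
    then obtain v where v: "v \<in> layer n G u (Suc j)" "e = {pw v, v}" unfolding F_def by blast
    then show "e \<in> G" using pw[OF v(1)] by simp
  qed
  moreover have "card F = card (layer n G u (Suc j))"
    unfolding F_def using inj by (rule card_image)
  moreover have "node_cover n F (layer n G u j)"
    unfolding node_cover_def F_def
  proof (intro conjI ballI)
    show "layer n G u j \<subseteq> {..<n}" unfolding layer_def by blast
  next
    fix e assume "e \<in> (\<lambda>v. {pw v, v}) ` layer n G u (Suc j)"
    then obtain v where v: "v \<in> layer n G u (Suc j)" "e = {pw v, v}" by blast
    then have "pw v \<in> layer n G u j" using pw[OF v(1)] pwn[OF v(1)] unfolding layer_def by simp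
    then show "e \<inter> layer n G u j \<noteq> {}" using v by blast
  qed
  moreover have "F \<subseteq> {e \<in> G. \<exists>x\<in>ball n G u j. \<exists>y\<in>{..<n} - ball n G u j. e = {x, y}}"
  proof
    fix e assume "e \<in> F"
    then obtain v where v: "v \<in> layer n G u (Suc j)" "e = {pw v, v}" unfolding F_def by blast
    have "pw v \<in> ball n G u j" using pw[OF v(1)] pwn[OF v(1)] unfolding ball_def by simp
    moreover have "v \<in> {..<n} - ball n G u j" using v(1) unfolding layer_def ball_def by auto
    moreover have "e \<in> G" using v pw[OF v(1)] by simp
    ultimately show "e \<in> {e \<in> G. \<exists>x\<in>ball n G u j. \<exists>y\<in>{..<n} - ball n G u j. e = {x, y}}"
      using v(2) by blast
  qed
  ultimately show ?thesis by (intro exI[of _ F] conjI)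
qed

lemma ecount_ge_layer:
  assumes "simple_graph_on n G"
  shows "card (layer n G u (Suc j)) \<le> ecount G (ball n G u j) ({..<n} - ball n G u j)"
proof -
  obtain F where F: "card F = card (layer n G u (Suc j))"
      "F \<subseteq> {e \<in> G. \<exists>x\<in>ball n G u j. \<exists>y\<in>{..<n} - ball n G u j. e = {x, y}}"
    using layer_edges[OF assms] by blast
  have "finite {e \<in> G. \<exists>x\<in>ball n G u j. \<exists>y\<in>{..<n} - ball n G u j. e = {x, y}}"
    using simple_finite[OF assms] by simp
  from card_mono[OF this F(2)] show ?thesis using F(1) unfolding ecount_def by simp
qed

lemma us_step:
  assumes "simple_graph_on n G"
    and US: "\<forall>F S. F \<subseteq> G \<and> real (card F) \<ge> t * real n \<and> node_cover n F S \<longrightarrow>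
                    real (card S) \<ge> real (card F) / C"
    and "t \<le> e" "C > 0" "real (card (layer n G u (Suc j))) \<ge> e * real n" "0 \<le> e"
  shows "real (card (layer n G u j)) \<ge> e / max 1 C * real n"
proof -
  obtain F where F: "F \<subseteq> G" "card F = card (layer n G u (Suc j))" "node_cover n F (layer n G u j)"
    using layer_edges[OF assms(1)] by blast
  have "t * real n \<le> e * real n" using assms(3) by (simp add: mult_right_mono)
  then have "real (card F) \<ge> t * real n" using F(2) assms(5) by simp
  then have "real (card (layer n G u j)) \<ge> real (card F) / C" using US F(1,3) by blast
  moreover have "real (card F) / C \<ge> real (card F) / max 1 C"
    using assms(4) by (intro divide_left_mono) auto
  moreover have "real (card F) / max 1 C \<ge> e * real n / max 1 C"
    using F(2) assms(5) by (intro divide_right_mono) auto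
  ultimately show ?thesis by simp
qed

lemma chain:
  assumes step: "\<forall>i<L. \<forall>j. real (card (layer n G u (Suc j))) \<ge> e i * real n \<longrightarrow>
                     real (card (layer n G u j)) \<ge> e (Suc i) * real n"
  shows "i + m < L \<Longrightarrow> real (card (layer n G u (Suc r + m))) \<ge> e i * real n \<Longrightarrow>
         real (card (layer n G u (Suc r))) \<ge> e (i + m) * real n"
proof (induction m arbitrary: i)
  case 0
  then show ?case by simp
next
  case (Suc m)
  have "i < L" using Suc.prems by simp
  have "real (card (layer n G u (Suc (Suc r + m)))) \<ge> e i * real n"
    using Suc.prems(2) by simp
  then have "real (card (layer n G u (Suc r + m))) \<ge> e (Suc i) * real n"
    using step \<open>i < L\<close> by blast
  then have "real (card (layer n G u (Suc r))) \<ge> e (Suc i + m) * real n"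
    using Suc.IH[of "Suc i"] Suc.prems(1) by simp
  then show ?case by simp
qed

lemma nat_le_ceil: "real k \<le> x \<Longrightarrow> k \<le> nat \<lceil>x\<rceil>"
proof -
  assume "real k \<le> x"
  then have "real k \<le> real_of_int \<lceil>x\<rceil>" using le_of_int_ceiling[of x] by linarith
  then have "int k \<le> \<lceil>x\<rceil>" by linarith
  then show "k \<le> nat \<lceil>x\<rceil>" by linarith
qed

lemma core:
  fixes n :: nat and G :: graph and u :: nat and \<epsilon> b fn :: real and e :: "nat \<Rightarrow> real" and L :: nat
  assumes sg: "simple_graph_on n G" and npos: "n > 0"
    and eps: "0 < \<epsilon>" "\<epsilon> < 1/2"
    and Ldef: "L = nat \<lceil>2*b\<rceil> + 1"
    and e0: "e 0 = \<epsilon> / (2 * real L)"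
    and epos: "\<And>i. e i > 0" and edec: "\<And>i. e (Suc i) \<le> e i"
    and step: "\<forall>i<L. \<forall>j. real (card (layer n G u (Suc j))) \<ge> e i * real n \<longrightarrow>
                     real (card (layer n G u j)) \<ge> e (Suc i) * real n"
    and good: "real (card {v \<in> {..<n}. \<exists>k. gdist G u v = enat k \<and> \<bar>fn - real k\<bar> < b}) > (1 - \<epsilon>/2) * real n"
  shows "(\<exists>r. real (card (ball n G u r)) \<ge> \<epsilon> * real n) \<and>
     (\<forall>r. \<epsilon> * real n \<le> real (card (ball n G u r)) \<and> real (card (ball n G u r)) \<le> (1 - \<epsilon>) * real n \<longrightarrow>
          real (ecount G (ball n G u r) ({..<n} - ball n G u r)) \<ge> e L * real (card (ball n G u r)))"
proof
  define Good where "Good = {v \<in> {..<n}. \<exists>k. gdist G u v = enat k \<and> \<bar>fn - real k\<bar> < b}"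
  have finG: "finite Good" unfolding Good_def by simp
  have cardGood: "real (card Good) > (1 - \<epsilon>/2) * real n" using good unfolding Good_def .
  have finB: "finite (ball n G u r)" for r unfolding ball_def by simp
  have Bsub: "ball n G u r \<subseteq> {..<n}" for r unfolding ball_def by blast
  have cardB: "card (ball n G u r) \<le> n" for r using card_mono[OF _ Bsub[of r]] by simp
  show "\<exists>r. real (card (ball n G u r)) \<ge> \<epsilon> * real n"
  proof
    define R where "R = nat \<lceil>fn + b\<rceil>"
    have "Good \<subseteq> ball n G u R"
    proof
      fix v assume "v \<in> Good"
      then obtain k where k: "v < n" "gdist G u v = enat k" "\<bar>fn - real k\<bar> < b" unfolding Good_def by blast
      have "real k \<le> fn + b" using k(3) by linarith
      then have "k \<le> R" unfolding R_def by (rule nat_le_ceil)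
      then show "v \<in> ball n G u R" using k unfolding ball_def by simp
    qed
    then have "card Good \<le> card (ball n G u R)" using finB by (rule card_mono[rotated])
    moreover have "\<epsilon> * real n \<le> (1 - \<epsilon>/2) * real n" using eps by (intro mult_right_mono) auto
    ultimately show "real (card (ball n G u R)) \<ge> \<epsilon> * real n" using cardGood
      by (smt (verit) of_nat_mono)
  qed
  show "\<forall>r. \<epsilon> * real n \<le> real (card (ball n G u r)) \<and> real (card (ball n G u r)) \<le> (1 - \<epsilon>) * real n \<longrightarrow>
          real (ecount G (ball n G u r) ({..<n} - ball n G u r)) \<ge> e L * real (card (ball n G u r))"
  proof (intro allI impI)
    fix r assume rB: "\<epsilon> * real n \<le> real (card (ball n G u r)) \<and> real (card (ball n G u r)) \<le> (1 - \<epsilon>) * real n"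
    define B where "B = ball n G u r"
    have rB1: "\<epsilon> * real n \<le> real (card B)" and rB2: "real (card B) \<le> (1 - \<epsilon>) * real n"
      using rB unfolding B_def by auto
    have "card (Good \<union> B) \<le> n"
      using card_mono[of "{..<n}" "Good \<union> B"] Bsub[of r] unfolding B_def Good_def by auto
    moreover have "card (Good \<union> B) + card (Good \<inter> B) = card Good + card B"
      using finG finB[of r] unfolding B_def by (rule card_Un_Int[symmetric])
    ultimately have "real (card (Good \<inter> B)) \<ge> real (card Good) + real (card B) - real n" by linarith
    moreover have "(1 - \<epsilon>/2) * real n + \<epsilon> * real n - real n = \<epsilon>/2 * real n"
      by (simp add: algebra_simps)
    moreover have "\<epsilon>/2 * real n \<ge> 0" using eps by simp
    ultimately have "real (card (Good \<inter> B)) > 0" using cardGood rB1 by linarith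
    then have "Good \<inter> B \<noteq> {}" by (intro notI) simp
    then obtain v0 where v0: "v0 \<in> Good" "v0 \<in> B" by blast
    then obtain k0 where k0: "gdist G u v0 = enat k0" "\<bar>fn - real k0\<bar> < b" unfolding Good_def by blast
    have "k0 \<le> r" using v0(2) k0(1) unfolding B_def ball_def by simp
    define Gc where "Gc = Good - B"
    have "card Good = card Gc + card (Good \<inter> B)"
    proof -
      have "card (Good \<inter> B) \<le> card Good" using finG by (intro card_mono) auto
      moreover have "card Gc = card Good - card (Good \<inter> B)"
        unfolding Gc_def using finG by (intro card_Diff_subset_Int) simp
      ultimately show ?thesis by simp
    qed
    moreover have "card (Good \<inter> B) \<le> card B" using finB[of r] unfolding B_def by (intro card_mono) auto
    ultimately have cGc: "real (card Gc) > \<epsilon> / 2 * real n" using cardGood rB2 by (simp add: algebra_simps)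
    have "Gc \<subseteq> (\<Union>j\<in>{1..L}. layer n G u (r + j))"
    proof
      fix v assume "v \<in> Gc"
      then obtain k where k: "v < n" "gdist G u v = enat k" "\<bar>fn - real k\<bar> < b" "v \<notin> B"
        unfolding Gc_def Good_def by blast
      have "\<not> k \<le> r" using k unfolding B_def ball_def by auto
      have "real k < real k0 + 2 * b" using k(3) k0(2) by linarith
      then have "real (k - r) < 2 * b" using \<open>k0 \<le> r\<close> \<open>\<not> k \<le> r\<close> by (simp add: of_nat_diff)
      then have "k - r \<le> nat \<lceil>2*b\<rceil>" by (intro nat_le_ceil) simp
      then have "k - r \<in> {1..L}" using \<open>\<not> k \<le> r\<close> Ldef by simp
      moreover have "v \<in> layer n G u (r + (k - r))" using k \<open>\<not> k \<le> r\<close> unfolding layer_def by simp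
      ultimately show "v \<in> (\<Union>j\<in>{1..L}. layer n G u (r + j))" by blast
    qed
    then have "card Gc \<le> card (\<Union>j\<in>{1..L}. layer n G u (r + j))"
      by (intro card_mono) (auto simp: layer_def)
    also have "\<dots> \<le> (\<Sum>j\<in>{1..L}. card (layer n G u (r + j)))" by (rule card_UN_le) simp
    finally have "real (card Gc) \<le> real (\<Sum>j\<in>{1..L}. card (layer n G u (r + j)))"
      by (rule of_nat_mono)
    then have sumge: "real (card Gc) \<le> (\<Sum>j\<in>{1..L}. real (card (layer n G u (r + j))))"
      by (simp add: of_nat_sum)
    have Lpos: "L > 0" using Ldef by simp
    have "\<exists>j\<in>{1..L}. real (card (layer n G u (r + j))) \<ge> e 0 * real n"
    proof (rule ccontr)
      assume "\<not> ?thesis"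
      then have "\<forall>j\<in>{1..L}. real (card (layer n G u (r + j))) < e 0 * real n" by auto
      then have "(\<Sum>j\<in>{1..L}. real (card (layer n G u (r + j)))) < (\<Sum>j\<in>{1..L}. e 0 * real n)"
        using Lpos by (intro sum_strict_mono) auto
      also have "\<dots> = \<epsilon> / 2 * real n" using Lpos by (simp add: e0)
      finally show False using sumge cGc by simp
    qed
    then obtain j where j: "j \<in> {1..L}" "real (card (layer n G u (r + j))) \<ge> e 0 * real n" by blast
    define m where "m = j - 1"
    have jm: "r + j = Suc r + m" "m < L" using j(1) unfolding m_def by auto
    have "real (card (layer n G u (Suc r))) \<ge> e (0 + m) * real n"
      using chain[OF step, of 0 m r] jm j(2) by simp
    moreover have "e L \<le> e m" using lift_Suc_antimono_le[of e, OF edec] jm(2) by simp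
    ultimately have "real (card (layer n G u (Suc r))) \<ge> e L * real n"
      using mult_right_mono[of "e L" "e m" "real n"] by simp
    moreover have "real (card (layer n G u (Suc r))) \<le> real (ecount G B ({..<n} - B))"
      using ecount_ge_layer[OF sg] unfolding B_def by simp
    moreover have "e L * real (card B) \<le> e L * real n"
      using cardB[of r] epos[of L] unfolding B_def by simp
    ultimately show "real (ecount G (ball n G u r) ({..<n} - ball n G u r)) \<ge> e L * real (card (ball n G u r))"
      unfolding B_def by linarith
  qed
qed

lemma prob_sum_finite:
  assumes "finite (set_pmf p)"
  shows "measure_pmf.prob p S = (\<Sum>x\<in>set_pmf p. if x \<in> S then pmf p x else 0)"
proof -
  have "measure_pmf.prob p S = measure_pmf.prob p (S \<inter> set_pmf p)"
    by (simp add: measure_Int_set_pmf Int_commute)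
  also have "\<dots> = sum (pmf p) (S \<inter> set_pmf p)"
    using assms by (simp add: measure_measure_pmf_finite)
  also have "\<dots> = (\<Sum>x\<in>set_pmf p. if x \<in> S then pmf p x else 0)"
    using assms by (simp add: sum.If_cases Int_commute)
  finally show ?thesis .
qed

lemma prob_pair_sum:
  assumes "finite (set_pmf A)" "finite (set_pmf B)"
  shows "measure_pmf.prob (pair_pmf A B) S =
     (\<Sum>a\<in>set_pmf A. pmf A a * measure_pmf.prob B {b. (a, b) \<in> S})"
proof -
  have "measure_pmf.prob (pair_pmf A B) S =
     (\<Sum>x\<in>set_pmf A \<times> set_pmf B. if x \<in> S then pmf (pair_pmf A B) x else 0)"
    using assms by (simp add: prob_sum_finite)
  also have "\<dots> = (\<Sum>a\<in>set_pmf A. \<Sum>b\<in>set_pmf B. if (a,b) \<in> S then pmf A a * pmf B b else 0)"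
    unfolding sum.cartesian_product by (intro sum.cong) (auto simp: pmf_pair)
  also have "\<dots> = (\<Sum>a\<in>set_pmf A. pmf A a * (\<Sum>b\<in>set_pmf B. if (a,b) \<in> S then pmf B b else 0))"
    by (simp add: sum_distrib_left if_distrib cong: if_cong)
  also have "\<dots> = (\<Sum>a\<in>set_pmf A. pmf A a * measure_pmf.prob B {b. (a, b) \<in> S})"
    using assms by (simp add: prob_sum_finite)
  finally show ?thesis .
qed


definition USset :: "nat \<Rightarrow> real \<Rightarrow> real \<Rightarrow> graph set" where
  "USset n t C = {G. \<forall>F S. F \<subseteq> G \<and> real (card F) \<ge> t * real n \<and> node_cover n F S \<longrightarrow>
                    real (card S) \<ge> real (card F) / C}"

definition PS :: "nat \<Rightarrow> real \<Rightarrow> real \<Rightarrow> (graph \<times> nat) set" where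
  "PS n \<epsilon> \<alpha> = {(G, u). (\<exists>r. real (card (ball n G u r)) \<ge> \<epsilon> * real n) \<and>
                   (\<forall>r. \<epsilon> * real n \<le> real (card (ball n G u r)) \<and>
                        real (card (ball n G u r)) \<le> (1 - \<epsilon>) * real n \<longrightarrow>
                        real (ecount G (ball n G u r) ({..<n} - ball n G u r))
                          \<ge> \<alpha> * real (card (ball n G u r)))}"

lemma main_n:
  fixes A :: "graph pmf" and n :: nat and \<epsilon> b fn :: real and e t C :: "nat \<Rightarrow> real" and L :: nat
  assumes supp: "\<forall>G\<in>set_pmf A. simple_graph_on n G" and npos: "n > 0"
    and eps: "0 < \<epsilon>" "\<epsilon> < 1/2"
    and Ldef: "L = nat \<lceil>2*b\<rceil> + 1"
    and e0: "e 0 = \<epsilon> / (2 * real L)"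
    and epos: "\<And>i. e i > 0" and edec: "\<And>i. e (Suc i) \<le> e i"
    and tC: "\<forall>i<L. t i \<le> e i \<and> C i > 0 \<and> e (Suc i) = e i / max 1 (C i)"
    and tsum: "(\<Sum>i<L. t i) \<le> \<epsilon>/4"
    and US: "\<forall>i<L. measure_pmf.prob A (USset n (t i) (C i)) \<ge> 1 - t i"
    and SI: "measure_pmf.prob (pair_pmf A (pair_pmf (pmf_of_set {..<n}) (pmf_of_set {..<n})))
          {(G, u, v). \<exists>k. gdist G u v = enat k \<and> \<bar>fn - real k\<bar> < b} > 1 - \<epsilon>^2/8"
  shows "measure_pmf.prob (pair_pmf A (pmf_of_set {..<n})) (PS n \<epsilon> (e L)) > 1 - \<epsilon>"
proof -
  define U where "U = pmf_of_set {..<n::nat}"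
  have setU: "set_pmf U = {..<n}" unfolding U_def using npos by (intro set_pmf_of_set) auto
  have finA: "finite (set_pmf A)"
  proof (rule finite_subset)
    show "set_pmf A \<subseteq> Pow (Pow {..<n})"
    proof
      fix G assume "G \<in> set_pmf A"
      then have "simple_graph_on n G" using supp by blast
      then show "G \<in> Pow (Pow {..<n})" using simple_sub by blast
    qed
  qed simp
  define E where "E = {(G, u, v). \<exists>k. gdist G u v = enat k \<and> \<bar>fn - real k\<bar> < b}"
  define h where "h G u = card {v \<in> {..<n}. \<exists>k. gdist G u v = enat k \<and> \<bar>fn - real k\<bar> < b}" for G u
  define Bd where "Bd G = {u \<in> {..<n}. real (h G u) \<le> (1 - \<epsilon>/2) * real n}" for G
  define D where "D = (\<Sum>G\<in>set_pmf A. pmf A G * (real (card (Bd G)) / real n))"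
  define X where "X = {G. \<forall>i<L. G \<in> USset n (t i) (C i)}"
  have probE: "measure_pmf.prob (pair_pmf U U) {x. (G, x) \<in> E} \<le> 1 - \<epsilon>/2 * (real (card (Bd G)) / real n)" for G
  proof -
    have BdS: "Bd G \<subseteq> {..<n}" unfolding Bd_def by blast
    have hle: "real (h G u) \<le> real n - \<epsilon>/2 * real n * indicator (Bd G) u" if "u < n" for u
    proof -
      have "h G u \<le> card {..<n}" unfolding h_def by (intro card_mono) auto
      then have hn: "real (h G u) \<le> real n" by simp
      show ?thesis
      proof (cases "u \<in> Bd G")
        case True
        then have "real (h G u) \<le> (1 - \<epsilon>/2) * real n" unfolding Bd_def by blast
        then show ?thesis using True by (simp add: algebra_simps)
      next
        case False
        then show ?thesis using hn by simp
      qed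
    qed
    have pmfU: "pmf U u = 1 / real n" if "u < n" for u unfolding U_def using that npos by (subst pmf_of_set) auto
    have pU: "measure_pmf.prob U {v. (G, u, v) \<in> E} = real (h G u) / real n" for u
    proof -
      have "{..<n} \<inter> {v. (G, u, v) \<in> E} =
          {v \<in> {..<n}. \<exists>k. gdist G u v = enat k \<and> \<bar>fn - real k\<bar> < b}"
        unfolding E_def by auto
      then show ?thesis unfolding U_def h_def using npos by (subst measure_pmf_of_set) auto
    qed
    have "measure_pmf.prob (pair_pmf U U) {x. (G, x) \<in> E} =
        (\<Sum>u\<in>{..<n}. pmf U u * measure_pmf.prob U {v. (u, v) \<in> {x. (G, x) \<in> E}})"
      using setU by (subst prob_pair_sum) auto
    also have "\<dots> = (\<Sum>u\<in>{..<n}. (1 / real n) * (real (h G u) / real n))"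
      by (intro sum.cong refl) (simp add: pmfU pU)
    also have "\<dots> = (\<Sum>u\<in>{..<n}. real (h G u)) / (real n * real n)"
      by (simp add: sum_divide_distrib)
    also have "\<dots> \<le> (\<Sum>u\<in>{..<n}. real n - \<epsilon>/2 * real n * indicator (Bd G) u) / (real n * real n)"
      using hle by (intro divide_right_mono sum_mono) auto
    also have "\<dots> = (real n * real n - \<epsilon>/2 * real n * real (card (Bd G))) / (real n * real n)"
    proof -
      have "(\<Sum>u\<in>{..<n}. indicator (Bd G) u :: real) = real (card ({..<n} \<inter> Bd G))"
        by (simp add: sum.inter_restrict indicator_def)
      also have "{..<n} \<inter> Bd G = Bd G" using BdS by blast
      finally have si: "(\<Sum>u\<in>{..<n}. indicator (Bd G) u :: real) = real (card (Bd G))" .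
      have "(\<Sum>u\<in>{..<n}. \<epsilon>/2 * real n * indicator (Bd G) u) = \<epsilon>/2 * real n * (\<Sum>u\<in>{..<n}. indicator (Bd G) u)"
        by (rule sum_distrib_left[symmetric])
      then have "(\<Sum>u\<in>{..<n}. \<epsilon>/2 * real n * indicator (Bd G) u) = \<epsilon>/2 * real n * real (card (Bd G))"
        using si by simp
      then show ?thesis by (simp add: sum_subtractf)
    qed
    also have "\<dots> = 1 - \<epsilon>/2 * (real (card (Bd G)) / real n)"
      using npos by (simp add: field_simps)
    finally show ?thesis .
  qed
  have "measure_pmf.prob (pair_pmf A (pair_pmf U U)) E =
      (\<Sum>G\<in>set_pmf A. pmf A G * measure_pmf.prob (pair_pmf U U) {x. (G, x) \<in> E})"
    using finA setU by (intro prob_pair_sum) auto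
  also have "\<dots> \<le> (\<Sum>G\<in>set_pmf A. pmf A G * (1 - \<epsilon>/2 * (real (card (Bd G)) / real n)))"
    using probE by (intro sum_mono mult_left_mono) auto
  also have "\<dots> = 1 - \<epsilon>/2 * D"
    using finA by (simp add: D_def algebra_simps sum_subtractf sum_distrib_left sum_pmf_eq_1)
  finally have "measure_pmf.prob (pair_pmf A (pair_pmf U U)) E \<le> 1 - \<epsilon>/2 * D" .
  then have "1 - \<epsilon>^2/8 < 1 - \<epsilon>/2 * D" using SI unfolding U_def E_def by linarith
  then have "\<epsilon>/2 * D < \<epsilon>/2 * (\<epsilon>/4)" by (simp add: power2_eq_square)
  then have Dlt: "D < \<epsilon>/4" using eps mult_less_cancel_left_pos[of "\<epsilon>/2" D "\<epsilon>/4"] by simp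
  have probX: "measure_pmf.prob A X \<ge> 1 - \<epsilon>/4"
  proof -
    have compl: "UNIV - X = (\<Union>i\<in>{..<L}. UNIV - USset n (t i) (C i))" unfolding X_def by auto
    have "measure_pmf.prob A (UNIV - X) \<le> (\<Sum>i\<in>{..<L}. measure_pmf.prob A (UNIV - USset n (t i) (C i)))"
      unfolding compl by (rule measure_pmf.finite_measure_subadditive_finite) auto
    also have "\<dots> \<le> (\<Sum>i\<in>{..<L}. t i)"
    proof (rule sum_mono)
      fix i assume "i \<in> {..<L}"
      then have "measure_pmf.prob A (USset n (t i) (C i)) \<ge> 1 - t i" using US by blast
      moreover have "measure_pmf.prob A (UNIV - USset n (t i) (C i)) = 1 - measure_pmf.prob A (USset n (t i) (C i))"
        using measure_pmf.prob_compl[of "USset n (t i) (C i)" A] by simp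
      ultimately show "measure_pmf.prob A (UNIV - USset n (t i) (C i)) \<le> t i" by linarith
    qed
    also have "\<dots> \<le> \<epsilon>/4" using tsum by simp
    finally have "measure_pmf.prob A (UNIV - X) \<le> \<epsilon>/4" .
    moreover have "measure_pmf.prob A (UNIV - X) = 1 - measure_pmf.prob A X"
      using measure_pmf.prob_compl[of X A] by simp
    ultimately show ?thesis by linarith
  qed
  have probG: "measure_pmf.prob U {u. (G, u) \<in> PS n \<epsilon> (e L)} \<ge>
       (if G \<in> X then 1 else 0) - real (card (Bd G)) / real n" if GA: "G \<in> set_pmf A" for G
  proof (cases "G \<in> X")
    case False
    have "0 \<le> measure_pmf.prob U {u. (G, u) \<in> PS n \<epsilon> (e L)}" by simp
    moreover have "0 \<le> real (card (Bd G)) / real n" by simp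
    ultimately show ?thesis using False by (simp only: if_False)
  next
    case True
    have sg: "simple_graph_on n G" using supp GA by blast
    have BdS: "Bd G \<subseteq> {..<n}" unfolding Bd_def by blast
    have sub: "{..<n} - Bd G \<subseteq> {..<n} \<inter> {u. (G, u) \<in> PS n \<epsilon> (e L)}"
    proof
      fix u assume u: "u \<in> {..<n} - Bd G"
      have step: "\<forall>i<L. \<forall>j. real (card (layer n G u (Suc j))) \<ge> e i * real n \<longrightarrow>
                     real (card (layer n G u j)) \<ge> e (Suc i) * real n"
      proof (intro allI impI)
        fix i j assume i: "i < L" and lj: "real (card (layer n G u (Suc j))) \<ge> e i * real n"
        have USi: "\<forall>F S. F \<subseteq> G \<and> real (card F) \<ge> t i * real n \<and> node_cover n F S \<longrightarrow>
                    real (card S) \<ge> real (card F) / C i"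
          using True i unfolding X_def USset_def by blast
        have "real (card (layer n G u j)) \<ge> e i / max 1 (C i) * real n"
          using us_step[OF sg USi, of "e i" u j] tC i lj epos[of i] by auto
        then show "real (card (layer n G u j)) \<ge> e (Suc i) * real n" using tC i by simp
      qed
      have good: "real (card {v \<in> {..<n}. \<exists>k. gdist G u v = enat k \<and> \<bar>fn - real k\<bar> < b}) > (1 - \<epsilon>/2) * real n"
        using u unfolding Bd_def h_def by auto
      have "(G, u) \<in> PS n \<epsilon> (e L)"
        using core[OF sg npos eps Ldef e0 epos edec step good] unfolding PS_def by simp
      then show "u \<in> {..<n} \<inter> {u. (G, u) \<in> PS n \<epsilon> (e L)}" using u by blast
    qed
    have "card ({..<n} - Bd G) \<le> card ({..<n} \<inter> {u. (G, u) \<in> PS n \<epsilon> (e L)})"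
      using sub by (intro card_mono) auto
    moreover have "card ({..<n} - Bd G) = n - card (Bd G)" using BdS finite_subset[OF BdS] by (simp add: card_Diff_subset)
    moreover have "card (Bd G) \<le> n" using BdS card_mono[of "{..<n}" "Bd G"] by simp
    ultimately have "real n - real (card (Bd G)) \<le> real (card ({..<n} \<inter> {u. (G, u) \<in> PS n \<epsilon> (e L)}))"
      by linarith
    then have "(real n - real (card (Bd G))) / real n \<le> measure_pmf.prob U {u. (G, u) \<in> PS n \<epsilon> (e L)}"
      unfolding U_def using npos by (subst measure_pmf_of_set) (auto intro: divide_right_mono)
    moreover have "(real n - real (card (Bd G))) / real n = 1 - real (card (Bd G)) / real n"
      using npos by (simp add: field_simps)
    ultimately show ?thesis using True by simp
  qed
  have "measure_pmf.prob (pair_pmf A U) (PS n \<epsilon> (e L)) =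
      (\<Sum>G\<in>set_pmf A. pmf A G * measure_pmf.prob U {u. (G, u) \<in> PS n \<epsilon> (e L)})"
    using finA setU by (intro prob_pair_sum) auto
  also have "\<dots> \<ge> (\<Sum>G\<in>set_pmf A. pmf A G * ((if G \<in> X then 1 else 0) - real (card (Bd G)) / real n))"
    using probG by (intro sum_mono mult_left_mono) auto
  moreover have "(\<Sum>G\<in>set_pmf A. pmf A G * ((if G \<in> X then 1 else 0) - real (card (Bd G)) / real n))
      = measure_pmf.prob A X - D"
  proof -
    have "(\<Sum>G\<in>set_pmf A. pmf A G * ((if G \<in> X then 1 else 0) - real (card (Bd G)) / real n))
        = (\<Sum>G\<in>set_pmf A. (if G \<in> X then pmf A G else 0) - pmf A G * (real (card (Bd G)) / real n))"
      by (intro sum.cong refl) (simp add: right_diff_distrib)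
    also have "\<dots> = measure_pmf.prob A X - D"
      unfolding D_def using finA by (simp add: prob_sum_finite sum_subtractf)
    finally show ?thesis .
  qed
  ultimately have "measure_pmf.prob (pair_pmf A U) (PS n \<epsilon> (e L)) \<ge> measure_pmf.prob A X - D" by simp
  then show ?thesis using probX Dlt eps unfolding U_def by linarith
qed


theorem lemma3:
  fixes M :: "nat \<Rightarrow> graph pmf"
  assumes "random_network_model M"
    and "strongly_idemetric M"
    and "uniformly_sparse M"
  shows "PUMP M"
  unfolding PUMP_def
proof (intro allI impI)
  fix \<epsilon> :: real assume eps: "0 < \<epsilon> \<and> \<epsilon> < 1/2"
  then have eps1: "0 < \<epsilon>" and eps2: "\<epsilon> < 1/2" by auto
  obtain f :: "nat \<Rightarrow> real" where SIf: "\<forall>\<epsilon>::real. \<epsilon> > 0 \<longrightarrow> (\<exists>b::real.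
     (\<forall>\<^sub>F n in sequentially.
        measure_pmf.prob (pair_pmf (M n) (pair_pmf (pmf_of_set {..<n}) (pmf_of_set {..<n})))
          {(G, u, v). \<exists>k. gdist G u v = enat k \<and> \<bar>f n - real k\<bar> < b}
        > 1 - \<epsilon>))"
    using assms(2) unfolding strongly_idemetric_def by blast
  have "\<epsilon>^2/8 > 0" using eps1 by simp
  then obtain b where evSI: "\<forall>\<^sub>F n in sequentially.
        measure_pmf.prob (pair_pmf (M n) (pair_pmf (pmf_of_set {..<n}) (pmf_of_set {..<n})))
          {(G, u, v). \<exists>k. gdist G u v = enat k \<and> \<bar>f n - real k\<bar> < b}
        > 1 - \<epsilon>^2/8"
    using SIf by blast
  define L where "L = nat \<lceil>2*b\<rceil> + 1"
  have Lpos: "L > 0" unfolding L_def by simp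
  define d where "d = \<epsilon> / (4 * real L)"
  have dpos: "d > 0" unfolding d_def using eps1 Lpos by simp
  have USx: "\<exists>C. C > 0 \<and> (\<forall>\<^sub>F n in sequentially. measure_pmf.prob (M n) (USset n x C) \<ge> 1 - x)"
    if "x > 0" for x
    using assms(3) that unfolding uniformly_sparse_def USset_def by blast
  define Cf where "Cf x = (SOME C. C > 0 \<and> (\<forall>\<^sub>F n in sequentially. measure_pmf.prob (M n) (USset n x C) \<ge> 1 - x))" for x
  have Cf: "Cf x > 0 \<and> (\<forall>\<^sub>F n in sequentially. measure_pmf.prob (M n) (USset n x (Cf x)) \<ge> 1 - x)"
    if "x > 0" for x
    unfolding Cf_def using someI_ex[OF USx[OF that]] .
  define g where "g x = x / max 1 (Cf (min x d))" for x
  define e where "e i = (g ^^ i) (\<epsilon> / (2 * real L))" for i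
  have eSuc: "e (Suc i) = g (e i)" for i unfolding e_def by simp
  have e0: "e 0 = \<epsilon> / (2 * real L)" unfolding e_def by simp
  have epos: "e i > 0" for i
  proof (induction i)
    case 0 then show ?case using e0 eps1 Lpos by simp
  next
    case (Suc i) then show ?case unfolding eSuc g_def by simp
  qed
  have edec: "e (Suc i) \<le> e i" for i
  proof -
    have "e i / max 1 (Cf (min (e i) d)) \<le> e i / 1"
      using epos[of i] by (intro divide_left_mono) auto
    then show ?thesis unfolding eSuc g_def by simp
  qed
  define t where "t i = min (e i) d" for i
  define C where "C i = Cf (t i)" for i
  have tpos: "t i > 0" for i unfolding t_def using epos[of i] dpos by simp
  have tC: "\<forall>i<L. t i \<le> e i \<and> C i > 0 \<and> e (Suc i) = e i / max 1 (C i)"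
    using tpos Cf unfolding C_def by (auto simp: eSuc g_def t_def)
  have "(\<Sum>i<L. t i) \<le> (\<Sum>i<L. d)" unfolding t_def by (intro sum_mono) simp
  also have "\<dots> = \<epsilon>/4" unfolding d_def using Lpos by simp
  finally have tsum: "(\<Sum>i<L. t i) \<le> \<epsilon>/4" .
  have evUS: "\<forall>\<^sub>F n in sequentially. \<forall>i\<in>{..<L}. measure_pmf.prob (M n) (USset n (t i) (C i)) \<ge> 1 - t i"
    using Cf tpos unfolding C_def by (intro eventually_ball_finite) auto
  show "\<exists>\<alpha>::real. \<alpha> > 0 \<and>
     (\<forall>\<^sub>F n in sequentially.
        measure_pmf.prob (pair_pmf (M n) (pmf_of_set {..<n}))
          {(G, u). (\<exists>r. real (card (ball n G u r)) \<ge> \<epsilon> * real n) \<and>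
                   (\<forall>r. \<epsilon> * real n \<le> real (card (ball n G u r)) \<and>
                        real (card (ball n G u r)) \<le> (1 - \<epsilon>) * real n \<longrightarrow>
                        real (ecount G (ball n G u r) ({..<n} - ball n G u r))
                          \<ge> \<alpha> * real (card (ball n G u r)))}
        > 1 - \<epsilon>)"
  proof (intro exI conjI)
    show "e L > 0" by (rule epos)
    show "\<forall>\<^sub>F n in sequentially.
        measure_pmf.prob (pair_pmf (M n) (pmf_of_set {..<n}))
          {(G, u). (\<exists>r. real (card (ball n G u r)) \<ge> \<epsilon> * real n) \<and>
                   (\<forall>r. \<epsilon> * real n \<le> real (card (ball n G u r)) \<and>
                        real (card (ball n G u r)) \<le> (1 - \<epsilon>) * real n \<longrightarrow>
                        real (ecount G (ball n G u r) ({..<n} - ball n G u r))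
                          \<ge> e L * real (card (ball n G u r)))}
        > 1 - \<epsilon>"
      using evSI evUS eventually_gt_at_top[of 0]
    proof eventually_elim
      case (elim n)
      have supp: "\<forall>G\<in>set_pmf (M n). simple_graph_on n G"
        using assms(1) unfolding random_network_model_def by blast
      have "measure_pmf.prob (pair_pmf (M n) (pmf_of_set {..<n})) (PS n \<epsilon> (e L)) > 1 - \<epsilon>"
        using elim by (intro main_n[OF supp _ eps1 eps2 L_def e0 epos edec tC tsum]) auto
      then show ?case unfolding PS_def .
    qed
  qed
qed

end
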